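(* Let $L=\langle S,A,\to\rangle$ be a labelled transition system and $R\subseteq S\times S$. Then: $R$ is a weak bisimulation iff it is an $(o,o)$-generic bisimulation; $R$ is a delay bisimulation iff it is an $(o,b)$-generic bisimulation; $R$ is an $\eta$-bisimulation iff it is a $(b,o)$-generic bisimulation; $R$ is a branching bisimulation iff it is a $(b,b)$-generic bisimulation.
   Context: An LTS is $\langle S,A,\to\rangle$ with states $S$, actions $A$ containing the internal action $\tau$, and $\to\subseteq S\times A\times S$; write $s\xrightarrow{a}t$, and $\twoheadrightarrow$ for the reflexive-transitive closure of $\xrightarrow{\tau}$. All relations below are required to be symmetric, and the conditions are imposed whenever $s\,R\,t$ and $s\xrightarrow{a}s'$. Weak bisimulation: either $a=\tau$ and $s'\,R\,t$, or there exist $t',t_1,t_2$ with $t\twoheadrightarrow t_1\xrightarrow{a}t_2\twoheadrightarrow t'$ and $s'\,R\,t'$. Delay bisimulation: either $a=\tau$ and $s'\,R\,t$, or there exist $t',t_1$ with $t\twoheadrightarrow t_1\xrightarrow{a}t'$ and $s'\,R\,t'$. $\eta$-bisimulation: either $a=\tau$ and $s'\,R\,t$, or there exist $t',t_1,t_2$ with $t\twoheadrightarrow t_1\xrightarrow{a}t_2\twoheadrightarrow t'$, $s\,R\,t_1$ and $s'\,R\,t'$. Branching bisimulation: either $a=\tau$ and $s'\,R\,t$, or there exist $t',t_1$ with $t\twoheadrightarrow t_1\xrightarrow{a}t'$, $s\,R\,t_1$ and $s'\,R\,t'$. Generic: for $R\subseteq S\times S$ and $s,s',t$: $s\twoheadrightarrow_{o,R,t}s'$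 iff $s\twoheadrightarrow s'$; $s\twoheadrightarrow_{b,R,t}s'$ iff $s\twoheadrightarrow s'$, $t\,R\,s$ and $t\,R\,s'$. For $x,y\in\{o,b\}$, $R$ is an $(x,y)$-generic bisimulation if either $a=\tau$ and $s'\,R\,t$, or there exist $t',t_1,t_2$ with $t\twoheadrightarrow_{x,R,s}t_1\xrightarrow{a}t_2\twoheadrightarrow_{y,R,s'}t'$ and $s'\,R\,t'$. *)

theory Defs
  imports Main
begin

text \<open>An LTS is given by its transition relation step (states of type 's, actions
of type 'a) together with a distinguished internal action tau.\<close>

definition taus :: "('s \<Rightarrow> 'a \<Rightarrow> 's \<Rightarrow> bool) \<Rightarrow> 'a \<Rightarrow> 's \<Rightarrow> 's \<Rightarrow> bool" where
  "taus step tau = (\<lambda>x y. step x tau y)\<^sup>*\<^sup>*"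

definition weak_bisim :: "('s \<Rightarrow> 'a \<Rightarrow> 's \<Rightarrow> bool) \<Rightarrow> 'a \<Rightarrow> ('s \<Rightarrow> 's \<Rightarrow> bool) \<Rightarrow> bool" where
  "weak_bisim step tau R \<longleftrightarrow> symp R \<and>
     (\<forall>s t a s'. R s t \<and> step s a s' \<longrightarrow>
        (a = tau \<and> R s' t) \<or>
        (\<exists>t' t1 t2. taus step tau t t1 \<and> step t1 a t2 \<and> taus step tau t2 t' \<and> R s' t'))"

definition delay_bisim :: "('s \<Rightarrow> 'a \<Rightarrow> 's \<Rightarrow> bool) \<Rightarrow> 'a \<Rightarrow> ('s \<Rightarrow> 's \<Rightarrow> bool) \<Rightarrow> bool" where
  "delay_bisim step tau R \<longleftrightarrow> symp R \<and>
     (\<forall>s t a s'. R s t \<and> step s a s' \<longrightarrow>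
        (a = tau \<and> R s' t) \<or>
        (\<exists>t' t1. taus step tau t t1 \<and> step t1 a t' \<and> R s' t'))"

definition eta_bisim :: "('s \<Rightarrow> 'a \<Rightarrow> 's \<Rightarrow> bool) \<Rightarrow> 'a \<Rightarrow> ('s \<Rightarrow> 's \<Rightarrow> bool) \<Rightarrow> bool" where
  "eta_bisim step tau R \<longleftrightarrow> symp R \<and>
     (\<forall>s t a s'. R s t \<and> step s a s' \<longrightarrow>
        (a = tau \<and> R s' t) \<or>
        (\<exists>t' t1 t2. taus step tau t t1 \<and> step t1 a t2 \<and> taus step tau t2 t' \<and>
                    R s t1 \<and> R s' t'))"

definition branching_bisim :: "('s \<Rightarrow> 'a \<Rightarrow> 's \<Rightarrow> bool) \<Rightarrow> 'a \<Rightarrow> ('s \<Rightarrow> 's \<Rightarrow> bool) \<Rightarrow> bool" where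
  "branching_bisim step tau R \<longleftrightarrow> symp R \<and>
     (\<forall>s t a s'. R s t \<and> step s a s' \<longrightarrow>
        (a = tau \<and> R s' t) \<or>
        (\<exists>t' t1. taus step tau t t1 \<and> step t1 a t' \<and> R s t1 \<and> R s' t'))"

datatype mode = Mo | Mb

definition gen_taus :: "('s \<Rightarrow> 'a \<Rightarrow> 's \<Rightarrow> bool) \<Rightarrow> 'a \<Rightarrow> mode \<Rightarrow> ('s \<Rightarrow> 's \<Rightarrow> bool)
    \<Rightarrow> 's \<Rightarrow> 's \<Rightarrow> 's \<Rightarrow> bool" where
  "gen_taus step tau x R t s s' = (case x of
      Mo \<Rightarrow> taus step tau s s'
    | Mb \<Rightarrow> taus step tau s s' \<and> R t s \<and> R t s')"

definition generic_bisim :: "('s \<Rightarrow> 'a \<Rightarrow> 's \<Rightarrow> bool) \<Rightarrow> 'a \<Rightarrow> mode \<Rightarrow> mode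
    \<Rightarrow> ('s \<Rightarrow> 's \<Rightarrow> bool) \<Rightarrow> bool" where
  "generic_bisim step tau x y R \<longleftrightarrow> symp R \<and>
     (\<forall>s t a s'. R s t \<and> step s a s' \<longrightarrow>
        (a = tau \<and> R s' t) \<or>
        (\<exists>t' t1 t2. gen_taus step tau x R s t t1 \<and> step t1 a t2 \<and>
                    gen_taus step tau y R s' t2 t' \<and> R s' t'))"

end

theory Submission
  imports Defs
begin

theorem proposition4p6:
  fixes step :: "'s \<Rightarrow> 'a \<Rightarrow> 's \<Rightarrow> bool" and tau :: 'a and R :: "'s \<Rightarrow> 's \<Rightarrow> bool"
  shows "(weak_bisim step tau R \<longleftrightarrow> generic_bisim step tau Mo Mo R)
    \<and> (delay_bisim step tau R \<longleftrightarrow> generic_bisim step tau Mo Mb R)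
    \<and> (eta_bisim step tau R \<longleftrightarrow> generic_bisim step tau Mb Mo R)
    \<and> (branching_bisim step tau R \<longleftrightarrow> generic_bisim step tau Mb Mb R)"
proof (intro conjI)
  have refl: "\<And>x. taus step tau x x" by (simp add: taus_def)
  show "weak_bisim step tau R \<longleftrightarrow> generic_bisim step tau Mo Mo R"
    unfolding weak_bisim_def generic_bisim_def gen_taus_def by simp
  show "delay_bisim step tau R \<longleftrightarrow> generic_bisim step tau Mo Mb R"
    unfolding delay_bisim_def generic_bisim_def gen_taus_def mode.case
    by (metis refl)
  show "eta_bisim step tau R \<longleftrightarrow> generic_bisim step tau Mb Mo R"
    unfolding eta_bisim_def generic_bisim_def gen_taus_def mode.case
    by metis
  show "branching_bisim step tau R \<longleftrightarrow> generic_bisim step tau Mb Mb R"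
    unfolding branching_bisim_def generic_bisim_def gen_taus_def mode.case
    by (metis refl)
qed

end
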